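(* Let $G$ be a group, $S\subset G$ a symmetric determining set, and $H\triangleleft G$ a normal subgroup of finite index. If $S$ intersects each coset of $H$ in $G$, then $(S^3\cap H)^2$ is a determining set of $H$.
   Context: $S^k:=\{s_1\cdots s_k: s_j\in S\}$. A generating subset $S$ of a group $G$ containing the identity is a determining set if $G$ has a presentation $\langle S\mid\mathcal{R}\rangle$ in which every relator is a word of length $3$ in the letters $S\cup S^{-1}$. *)

theory Defs
  imports "HOL-Algebra.Algebra"
begin

text \<open>Words in the letters S \<union> S^-1: a letter is a pair (s, b) with s a generator;
  b = True means the formal inverse of s.\<close>

definition letter_val :: "('a, 'b) monoid_scheme \<Rightarrow> 'a \<times> bool \<Rightarrow> 'a" where
  "letter_val G l = (if snd l then inv\<^bsub>G\<^esub> (fst l) else fst l)"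

definition eval_word :: "('a, 'b) monoid_scheme \<Rightarrow> ('a \<times> bool) list \<Rightarrow> 'a" where
  "eval_word G w = foldr (\<lambda>l x. letter_val G l \<otimes>\<^bsub>G\<^esub> x) w \<one>\<^bsub>G\<^esub>"

definition words_over :: "'a set \<Rightarrow> ('a \<times> bool) list set" where
  "words_over S = {w. set w \<subseteq> S \<times> UNIV}"

definition pres_step :: "('a \<times> bool) list set \<Rightarrow> ('a \<times> bool) list \<Rightarrow> ('a \<times> bool) list \<Rightarrow> bool" where
  "pres_step R w w' \<longleftrightarrow> (\<exists>u v.
      w' = u @ v \<and>
      ((\<exists>a b. w = u @ [(a, b), (a, \<not> b)] @ v) \<or> (\<exists>r\<in>R. w = u @ r @ v)))"

text \<open>Equality in the group \<langle>S | R\<rangle> (free group on S modulo the normal closure of R):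
  the equivalence closure of the elementary steps.\<close>

definition pres_equiv :: "('a \<times> bool) list set \<Rightarrow> ('a \<times> bool) list \<Rightarrow> ('a \<times> bool) list \<Rightarrow> bool" where
  "pres_equiv R = (\<lambda>x y. pres_step R x y \<or> pres_step R y x)\<^sup>*\<^sup>*"

definition is_presentation :: "('a, 'b) monoid_scheme \<Rightarrow> 'a set \<Rightarrow> ('a \<times> bool) list set \<Rightarrow> bool" where
  "is_presentation G S R \<longleftrightarrow> S \<subseteq> carrier G \<and> R \<subseteq> words_over S \<and>
     generate G S = carrier G \<and>
     (\<forall>w\<in>words_over S. \<forall>w'\<in>words_over S. eval_word G w = eval_word G w' \<longleftrightarrow> pres_equiv R w w')"

definition determining_set :: "('a, 'b) monoid_scheme \<Rightarrow> 'a set \<Rightarrow> bool" where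
  "determining_set G S \<longleftrightarrow> S \<subseteq> carrier G \<and> \<one>\<^bsub>G\<^esub> \<in> S \<and> generate G S = carrier G \<and>
     (\<exists>R. (\<forall>r\<in>R. length r = 3) \<and> is_presentation G S R)"

end

theory Submission
  imports Defs
begin


lemma pres_equiv_refl: "pres_equiv R x x"
  unfolding pres_equiv_def by simp

lemma pres_equiv_sym: "pres_equiv R x y \<Longrightarrow> pres_equiv R y x"
  unfolding pres_equiv_def
  by (induction rule: rtranclp_induct) (auto intro: converse_rtranclp_into_rtranclp)

lemma pres_equiv_trans: "pres_equiv R x y \<Longrightarrow> pres_equiv R y z \<Longrightarrow> pres_equiv R x z"
  unfolding pres_equiv_def by (rule rtranclp_trans)

lemma pres_equiv_step: "pres_step R x y \<Longrightarrow> pres_equiv R x y"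
  unfolding pres_equiv_def by auto

lemma pres_equiv_step': "pres_step R y x \<Longrightarrow> pres_equiv R x y"
  unfolding pres_equiv_def by auto

lemma pres_step_ctx: "pres_step R x y \<Longrightarrow> pres_step R (u @ x @ v) (u @ y @ v)"
proof -
  assume "pres_step R x y"
  then obtain u' v' where y: "y = u' @ v'" and
    c: "(\<exists>a b. x = u' @ [(a, b), (a, \<not> b)] @ v') \<or> (\<exists>r\<in>R. x = u' @ r @ v')"
    unfolding pres_step_def by blast
  show ?thesis unfolding pres_step_def
    apply (rule exI[of _ "u @ u'"], rule exI[of _ "v' @ v"])
    using y c by auto
qed

lemma pres_equiv_ctx: "pres_equiv R x y \<Longrightarrow> pres_equiv R (u @ x @ v) (u @ y @ v)"
  unfolding pres_equiv_def
proof (induction rule: rtranclp_induct)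
  case base then show ?case by simp
next
  case (step y z)
  then show ?case using pres_step_ctx
    by (metis (no_types, lifting) rtranclp.rtrancl_into_rtrancl)
qed

lemma pres_equiv_app: "pres_equiv R x x' \<Longrightarrow> pres_equiv R y y' \<Longrightarrow> pres_equiv R (x @ y) (x' @ y')"
  using pres_equiv_ctx[of R x x' "[]" y] pres_equiv_ctx[of R y y' x' "[]"]
  by (auto intro: pres_equiv_trans)

lemma pres_equiv_induct[consumes 1, case_names refl step]:
  assumes "pres_equiv R x y" "P x"
    "\<And>y z. pres_equiv R x y \<Longrightarrow> P y \<Longrightarrow> pres_step R y z \<or> pres_step R z y \<Longrightarrow> P z"
  shows "P y"
  using assms(1) unfolding pres_equiv_def
proof (induction rule: rtranclp_induct)
  case base then show ?case using assms(2) by simp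
next
  case (step y z) then show ?case using assms(3) unfolding pres_equiv_def by blast
qed

lemma eval_word_Nil[simp]: "eval_word G [] = \<one>\<^bsub>G\<^esub>"
  unfolding eval_word_def by simp

lemma eval_word_Cons[simp]: "eval_word G (l # w) = letter_val G l \<otimes>\<^bsub>G\<^esub> eval_word G w"
  unfolding eval_word_def by simp

lemma words_over_Cons[simp]: "(l # w \<in> words_over S) = (fst l \<in> S \<and> w \<in> words_over S)"
  unfolding words_over_def by (cases l) auto

lemma words_over_append[simp]: "(u @ w \<in> words_over S) = (u \<in> words_over S \<and> w \<in> words_over S)"
  unfolding words_over_def by auto

lemma words_over_Nil[simp]: "[] \<in> words_over S"
  unfolding words_over_def by auto

lemma words_over_filter[simp]: "filter (\<lambda>l. fst l \<in> S) w \<in> words_over S"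
  unfolding words_over_def by auto

lemma filter_words_over: "w \<in> words_over S \<Longrightarrow> filter (\<lambda>l. fst l \<in> S) w = w"
  unfolding words_over_def by (induction w) auto

primrec rho :: "('a, 'b) monoid_scheme \<Rightarrow> ('a \<Rightarrow> 'a) \<Rightarrow> 'a \<Rightarrow> ('a \<times> bool) list \<Rightarrow> ('a \<times> bool) list" where
  "rho G rep g [] = []"
| "rho G rep g (l # w) = (rep g \<otimes>\<^bsub>G\<^esub> letter_val G l \<otimes>\<^bsub>G\<^esub> inv\<^bsub>G\<^esub> (rep (g \<otimes>\<^bsub>G\<^esub> letter_val G l)), False)
      # rho G rep (g \<otimes>\<^bsub>G\<^esub> letter_val G l) w"

context group begin

lemma letter_val_carrier[simp]: "fst l \<in> carrier G \<Longrightarrow> letter_val G l \<in> carrier G"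
  unfolding letter_val_def by auto

lemma eval_word_carrier[simp]: "w \<in> words_over (carrier G) \<Longrightarrow> eval_word G w \<in> carrier G"
  by (induction w) auto

lemma words_over_mono: "w \<in> words_over A \<Longrightarrow> A \<subseteq> B \<Longrightarrow> w \<in> words_over B"
  unfolding words_over_def by auto

lemma eval_word_append: "u \<in> words_over (carrier G) \<Longrightarrow> w \<in> words_over (carrier G) \<Longrightarrow>
   eval_word G (u @ w) = eval_word G u \<otimes> eval_word G w"
  by (induction u) (auto simp: m_assoc)

lemma letter_val_pair: "a \<in> carrier G \<Longrightarrow> letter_val G (a, b) \<otimes> letter_val G (a, \<not> b) = \<one>"
  unfolding letter_val_def by auto

lemma eval_pair: "a \<in> carrier G \<Longrightarrow> eval_word G [(a, b), (a, \<not> b)] = \<one>"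
  using letter_val_pair[of a b] by (simp del: letter_val_carrier add: letter_val_carrier)

end



lemma letter_val_F[simp]: "letter_val G (x, False) = x" by (simp add: letter_val_def)
lemma letter_val_T[simp]: "letter_val G (x, True) = inv\<^bsub>G\<^esub> x" by (simp add: letter_val_def)

locale ctx = group G for G :: "('a, 'b) monoid_scheme" (structure) +
  fixes S H :: "'a set" and R :: "('a \<times> bool) list set" and rep :: "'a \<Rightarrow> 'a"
  assumes S: "S \<subseteq> carrier G" and Ssym: "\<forall>s\<in>S. inv s \<in> S" and one_S: "\<one> \<in> S"
    and pres: "is_presentation G S R" and R3: "\<forall>r\<in>R. length r = 3"
    and sub: "subgroup H G"
    and rep_S: "\<And>g. g \<in> carrier G \<Longrightarrow> rep g \<in> S"
    and rep_H: "\<And>g. g \<in> carrier G \<Longrightarrow> rep g \<otimes> inv g \<in> H"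
    and rep_1: "\<And>g. g \<in> H \<Longrightarrow> rep g = \<one>"
begin

definition K where "K = (S <#> S <#> S) \<inter> H"
definition T where "T = K <#> K"
definition RT where "RT = {r. length r = 3 \<and> r \<in> words_over T \<and> eval_word G r = \<one>}"

lemma cancel1[simp]: "x \<in> carrier G \<Longrightarrow> y \<in> carrier G \<Longrightarrow> x \<otimes> (inv x \<otimes> y) = y"
  by (simp add: m_assoc[symmetric])
lemma cancel2[simp]: "x \<in> carrier G \<Longrightarrow> y \<in> carrier G \<Longrightarrow> inv x \<otimes> (x \<otimes> y) = y"
  by (simp add: m_assoc[symmetric])

lemma H_carrier: "H \<subseteq> carrier G" by (rule subgroup.subset[OF sub])
lemma H_one[simp]: "\<one> \<in> H" by (rule subgroup.one_closed[OF sub])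
lemma H_mult[intro]: "x \<in> H \<Longrightarrow> y \<in> H \<Longrightarrow> x \<otimes> y \<in> H" by (rule subgroup.m_closed[OF sub])
lemma H_inv[intro]: "x \<in> H \<Longrightarrow> inv x \<in> H" by (rule subgroup.m_inv_closed[OF sub])
lemma H_c[simp]: "x \<in> H \<Longrightarrow> x \<in> carrier G" using H_carrier by blast
lemma S_c[simp]: "x \<in> S \<Longrightarrow> x \<in> carrier G" using S by blast
lemma S_inv[intro]: "x \<in> S \<Longrightarrow> inv x \<in> S" using Ssym by blast
lemma rep_c[simp]: "g \<in> carrier G \<Longrightarrow> rep g \<in> carrier G" using rep_S S_c by blast

lemma S3I: "a \<in> S \<Longrightarrow> b \<in> S \<Longrightarrow> c \<in> S \<Longrightarrow> a \<otimes> b \<otimes> c \<in> S <#> S <#> S"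
  unfolding set_mult_def by blast
lemma S3E: "x \<in> S <#> S <#> S \<Longrightarrow> \<exists>a\<in>S. \<exists>b\<in>S. \<exists>c\<in>S. x = a \<otimes> b \<otimes> c"
  unfolding set_mult_def by blast

lemma KI: "a \<in> S \<Longrightarrow> b \<in> S \<Longrightarrow> c \<in> S \<Longrightarrow> a \<otimes> b \<otimes> c \<in> H \<Longrightarrow> a \<otimes> b \<otimes> c \<in> K"
  unfolding K_def using S3I by blast
lemma K_H: "x \<in> K \<Longrightarrow> x \<in> H" unfolding K_def by blast
lemma one_K[simp]: "\<one> \<in> K" using KI[OF one_S one_S one_S] by simp
lemma TI: "x \<in> K \<Longrightarrow> y \<in> K \<Longrightarrow> x \<otimes> y \<in> T"
  unfolding T_def set_mult_def by blast
lemma TE: "x \<in> T \<Longrightarrow> \<exists>a\<in>K. \<exists>b\<in>K. x = a \<otimes> b"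
  unfolding T_def set_mult_def by blast
lemma K_T: "x \<in> K \<Longrightarrow> x \<in> T" using TI[of x \<one>] K_H by simp
lemma one_T[simp]: "\<one> \<in> T" using K_T by simp
lemma T_H: "x \<in> T \<Longrightarrow> x \<in> H"
proof -
  assume "x \<in> T"
  then obtain a b where "a \<in> K" "b \<in> K" "x = a \<otimes> b" using TE by blast
  then show ?thesis using K_H H_mult by simp
qed
lemma T_c[simp]: "x \<in> T \<Longrightarrow> x \<in> carrier G" using T_H by simp

lemma K_inv: "x \<in> K \<Longrightarrow> inv x \<in> K"
proof -
  assume x: "x \<in> K"
  then obtain a b c where abc: "a \<in> S" "b \<in> S" "c \<in> S" "x = a \<otimes> b \<otimes> c"
    unfolding K_def using S3E by blast
  have "inv x = inv c \<otimes> inv b \<otimes> inv a" using abc by (simp add: inv_mult_group m_assoc)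
  moreover have "inv x \<in> H" using x K_H by blast
  ultimately show ?thesis using KI[of "inv c" "inv b" "inv a"] abc by auto
qed

lemma T_inv: "x \<in> T \<Longrightarrow> inv x \<in> T"
proof -
  assume "x \<in> T"
  then obtain a b where ab: "a \<in> K" "b \<in> K" "x = a \<otimes> b" using TE by blast
  have c: "a \<in> carrier G" "b \<in> carrier G" using ab K_H H_c by blast+
  have eq: "inv x = inv b \<otimes> inv a" using ab(3) inv_mult_group[OF c] by simp
  have "inv b \<in> K" "inv a \<in> K" using ab K_inv by blast+
  then have "inv b \<otimes> inv a \<in> T" by (rule TI)
  then show ?thesis by (simp only: eq)
qed

lemma lv_T: "fst l \<in> T \<Longrightarrow> letter_val G l \<in> T"
  unfolding letter_val_def using T_inv by auto
lemma lv_S: "fst l \<in> S \<Longrightarrow> letter_val G l \<in> S"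
  unfolding letter_val_def using S_inv by auto

lemma wS_c: "w \<in> words_over S \<Longrightarrow> w \<in> words_over (carrier G)"
  using words_over_mono S by blast
lemma wT_c: "w \<in> words_over T \<Longrightarrow> w \<in> words_over (carrier G)"
  using words_over_mono T_c by blast

lemma kappa_H: "g \<in> carrier G \<Longrightarrow> v \<in> carrier G \<Longrightarrow> rep g \<otimes> v \<otimes> inv (rep (g \<otimes> v)) \<in> H"
proof -
  assume g: "g \<in> carrier G" and v: "v \<in> carrier G"
  have "rep g \<otimes> v \<otimes> inv (rep (g \<otimes> v)) = (rep g \<otimes> inv g) \<otimes> inv (rep (g \<otimes> v) \<otimes> inv (g \<otimes> v))"
    using g v by (simp add: inv_mult_group m_assoc)
  also have "\<dots> \<in> H" using rep_H g v by blast
  finally show ?thesis .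
qed

lemma kappa_K: "g \<in> carrier G \<Longrightarrow> fst l \<in> S \<Longrightarrow>
   rep g \<otimes> letter_val G l \<otimes> inv (rep (g \<otimes> letter_val G l)) \<in> K"
proof -
  assume a: "g \<in> carrier G" "fst l \<in> S"
  have c: "letter_val G l \<in> S" using a lv_S by blast
  have "inv (rep (g \<otimes> letter_val G l)) \<in> S" using a c rep_S S_inv by simp
  moreover have "rep g \<otimes> letter_val G l \<otimes> inv (rep (g \<otimes> letter_val G l)) \<in> H"
    using kappa_H a c by simp
  ultimately show ?thesis using KI rep_S a c by blast
qed

lemma rho_K: "g \<in> carrier G \<Longrightarrow> u \<in> words_over S \<Longrightarrow> rho G rep g u \<in> words_over K"
  by (induction u arbitrary: g) (auto simp: kappa_K lv_S)

lemma rho_T: "g \<in> carrier G \<Longrightarrow> u \<in> words_over S \<Longrightarrow> rho G rep g u \<in> words_over T"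
  using rho_K words_over_mono K_T by blast

lemma rho_length[simp]: "length (rho G rep g u) = length u"
  by (induction u arbitrary: g) auto

lemma rho_append: "g \<in> carrier G \<Longrightarrow> u \<in> words_over S \<Longrightarrow>
  rho G rep g (u @ w) = rho G rep g u @ rho G rep (g \<otimes> eval_word G u) w"
proof (induction u arbitrary: g)
  case Nil then show ?case by simp
next
  case (Cons l u)
  have l: "letter_val G l \<in> carrier G" "u \<in> words_over S" using Cons lv_S by auto
  then show ?case using Cons wS_c by (simp add: m_assoc)
qed

lemma eval_rho: "g \<in> carrier G \<Longrightarrow> u \<in> words_over S \<Longrightarrow>
  eval_word G (rho G rep g u) = rep g \<otimes> eval_word G u \<otimes> inv (rep (g \<otimes> eval_word G u))"
proof (induction u arbitrary: g)
  case Nil then show ?case by simp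
next
  case (Cons l u)
  let ?v = "letter_val G l"
  have l: "?v \<in> carrier G" "u \<in> words_over S" "g \<otimes> ?v \<in> carrier G" using Cons lv_S by auto
  have e: "eval_word G u \<in> carrier G" using l wS_c by auto
  have "eval_word G (rho G rep g (l # u)) = (rep g \<otimes> ?v \<otimes> inv (rep (g \<otimes> ?v))) \<otimes>
     (rep (g \<otimes> ?v) \<otimes> eval_word G u \<otimes> inv (rep (g \<otimes> ?v \<otimes> eval_word G u)))"
    using Cons.IH[OF l(3) l(2)] by simp
  also have "\<dots> = rep g \<otimes> (?v \<otimes> eval_word G u) \<otimes> inv (rep (g \<otimes> (?v \<otimes> eval_word G u)))"
    using l e Cons.prems by (simp add: m_assoc inv_closed rep_c)
  finally show ?case by simp
qed

end


context ctx begin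

abbreviation eqT where "eqT \<equiv> pres_equiv RT"

lemma eval_H: "w \<in> words_over H \<Longrightarrow> eval_word G w \<in> H"
proof (induction w)
  case Nil then show ?case by simp
next
  case (Cons l w)
  have "letter_val G l \<in> H" using Cons.prems unfolding letter_val_def by auto
  then show ?case using Cons by auto
qed

lemma wT_H: "w \<in> words_over T \<Longrightarrow> w \<in> words_over H"
  using words_over_mono T_H by blast

lemma D: assumes "fst x \<in> T" "fst y \<in> T" "fst z \<in> T"
  "letter_val G x \<otimes> letter_val G y = letter_val G z"
  shows "eqT [x, y] [z]"
proof -
  obtain a d where z: "z = (a, d)" by (cases z)
  have a: "a \<in> T" using assms z by simp
  have 1: "pres_step RT [x, y, (a, \<not> d), (a, d)] [x, y]"
    unfolding pres_step_def
    apply (rule exI[of _ "[x, y]"], rule exI[of _ "[]"])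
    apply (rule conjI, simp)
    apply (rule disjI1, rule exI[of _ a], rule exI[of _ "\<not> d"])
    by simp
  have c: "letter_val G x \<in> carrier G" "letter_val G y \<in> carrier G"
    using assms by auto
  have "letter_val G x \<otimes> (letter_val G y \<otimes> letter_val G (a, \<not> d))
      = letter_val G z \<otimes> letter_val G (a, \<not> d)"
  proof -
    have "letter_val G (a, \<not> d) \<in> carrier G" using a by simp
    then show ?thesis using assms(4) c by (simp add: m_assoc[symmetric])
  qed
  also have "\<dots> = \<one>" using letter_val_pair[of a d] a z by simp
  finally have e: "eval_word G [x, y, (a, \<not> d)] = \<one>" using a by simp
  have r: "[x, y, (a, \<not> d)] \<in> RT" unfolding RT_def using e assms a by simp
  have 2: "pres_step RT [x, y, (a, \<not> d), (a, d)] [z]"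
    unfolding pres_step_def
    apply (rule exI[of _ "[]"], rule exI[of _ "[z]"])
    using r z by auto
  show ?thesis using pres_equiv_step'[OF 1] pres_equiv_step[OF 2] pres_equiv_trans by blast
qed

lemma one_eq: "eqT [(\<one>, False)] []"
proof -
  let ?r = "[(\<one>, False), (\<one>, False), (\<one>, True)]"
  have r: "?r \<in> RT" unfolding RT_def by simp
  have 1: "pres_step RT ?r []" unfolding pres_step_def
    apply (rule exI[of _ "[]"], rule exI[of _ "[]"]) using r by auto
  have 2: "pres_step RT ?r [(\<one>, False)]" unfolding pres_step_def
    apply (rule exI[of _ "[(\<one>, False)]"], rule exI[of _ "[]"])
    apply (rule conjI, simp)
    apply (rule disjI1, rule exI[of _ "\<one>"], rule exI[of _ False]) by simp
  show ?thesis using pres_equiv_step'[OF 2] pres_equiv_step[OF 1] pres_equiv_trans by blast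
qed

lemma len2: assumes "w \<in> words_over T" "length w = 2" "eval_word G w = \<one>"
  shows "eqT w []"
proof -
  obtain x y where w: "w = [x, y]" using assms(2)
    by (metis One_nat_def Suc_1 length_0_conv length_Suc_conv)
  have "letter_val G x \<otimes> letter_val G y = letter_val G (\<one>, False)"
    using assms w by simp
  then have "eqT [x, y] [(\<one>, False)]" using D assms w by simp
  then show ?thesis using one_eq pres_equiv_trans w by blast
qed

lemma len3: assumes "w \<in> words_over T" "length w = 3" "eval_word G w = \<one>"
  shows "eqT w []"
proof -
  have r: "w \<in> RT" unfolding RT_def using assms by simp
  have "pres_step RT w []" unfolding pres_step_def
    apply (rule exI[of _ "[]"], rule exI[of _ "[]"]) using r by auto
  then show ?thesis by (rule pres_equiv_step)
qed

lemma step_eval: "pres_step RT x y \<Longrightarrow>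
  eval_word G (filter (\<lambda>l. fst l \<in> T) x) = eval_word G (filter (\<lambda>l. fst l \<in> T) y)"
proof -
  let ?f = "filter (\<lambda>l. fst l \<in> T)"
  assume "pres_step RT x y"
  then obtain u v where y: "y = u @ v" and
    c: "(\<exists>a b. x = u @ [(a, b), (a, \<not> b)] @ v) \<or> (\<exists>r\<in>RT. x = u @ r @ v)"
    unfolding pres_step_def by blast
  have cu: "?f u \<in> words_over (carrier G)" "?f v \<in> words_over (carrier G)"
    using wT_c words_over_filter by blast+
  from c show ?thesis
  proof
    assume "\<exists>a b. x = u @ [(a, b), (a, \<not> b)] @ v"
    then obtain a b where x: "x = u @ [(a, b), (a, \<not> b)] @ v" by blast
    show ?thesis
    proof (cases "a \<in> T")
      case True
      have fx: "?f x = ?f u @ [(a, b), (a, \<not> b)] @ ?f v" using x True by simp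
      have w2: "[(a, b), (a, \<not> b)] \<in> words_over (carrier G)" using True by simp
      have "eval_word G (?f x) = eval_word G (?f u) \<otimes> (eval_word G [(a, b), (a, \<not> b)] \<otimes> eval_word G (?f v))"
        unfolding fx using cu w2 by (metis eval_word_append words_over_append)
      also have "\<dots> = eval_word G (?f y)"
        using eval_pair[of a b] True cu y by (simp add: eval_word_append)
      finally show ?thesis .
    next
      case False
      then show ?thesis using x y by simp
    qed
  next
    assume "\<exists>r\<in>RT. x = u @ r @ v"
    then obtain r where r: "r \<in> RT" "x = u @ r @ v" by blast
    have rw: "r \<in> words_over T" "eval_word G r = \<one>" using r unfolding RT_def by auto
    have fx: "?f x = ?f u @ r @ ?f v" using r filter_words_over[OF rw(1)] by simp
    have rc: "r \<in> words_over (carrier G)" using rw wT_c by blast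
    have "eval_word G (?f x) = eval_word G (?f u) \<otimes> (eval_word G r \<otimes> eval_word G (?f v))"
      unfolding fx using cu rc by (metis eval_word_append words_over_append)
    then show ?thesis using cu y rw by (simp add: eval_word_append)
  qed
qed

lemma eqT_sound: assumes "eqT x y" "x \<in> words_over T" "y \<in> words_over T"
  shows "eval_word G x = eval_word G y"
proof -
  have "eval_word G (filter (\<lambda>l. fst l \<in> T) x) = eval_word G (filter (\<lambda>l. fst l \<in> T) y)"
    using assms(1)
  proof (induction rule: pres_equiv_induct)
    case refl then show ?case by simp
  next
    case (step y z) then show ?case using step_eval by metis
  qed
  then show ?thesis using filter_words_over assms(2,3) by metis
qed

end


context ctx begin

abbreviation fS where "fS \<equiv> filter (\<lambda>l. fst l \<in> S)"

lemma R_S: "r \<in> R \<Longrightarrow> r \<in> words_over S"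
  using pres unfolding is_presentation_def by blast

lemma R_eval: assumes "r \<in> R" shows "eval_word G r = \<one>"
proof -
  have "pres_step R r []" unfolding pres_step_def
    apply (rule exI[of _ "[]"], rule exI[of _ "[]"]) using assms by auto
  then have "pres_equiv R r []" by (rule pres_equiv_step)
  then show ?thesis using pres R_S[OF assms] unfolding is_presentation_def
    by (metis eval_word_Nil words_over_Nil)
qed

lemma rho_pos: "l \<in> set (rho G rep g u) \<Longrightarrow> snd l = False"
  by (induction u arbitrary: g) auto

lemma rho_c: "g \<in> carrier G \<Longrightarrow> u \<in> words_over S \<Longrightarrow> g \<otimes> eval_word G u \<in> carrier G"
  using wS_c by simp

lemma rho_step: assumes "pres_step R x y" "g \<in> carrier G"
  shows "eqT (rho G rep g (fS x)) (rho G rep g (fS y))"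
proof -
  obtain u v where y: "y = u @ v" and
    c: "(\<exists>a b. x = u @ [(a, b), (a, \<not> b)] @ v) \<or> (\<exists>r\<in>R. x = u @ r @ v)"
    using assms(1) unfolding pres_step_def by blast
  define g1 where "g1 = g \<otimes> eval_word G (fS u)"
  have g1: "g1 \<in> carrier G" unfolding g1_def using rho_c assms(2) words_over_filter by blast
  have fy: "rho G rep g (fS y) = rho G rep g (fS u) @ [] @ rho G rep g1 (fS v)"
    unfolding g1_def y using rho_append assms(2) words_over_filter by simp
  from c show ?thesis
  proof
    assume "\<exists>a b. x = u @ [(a, b), (a, \<not> b)] @ v"
    then obtain a b where x: "x = u @ [(a, b), (a, \<not> b)] @ v" by blast
    show ?thesis
    proof (cases "a \<in> S")
      case True
      let ?p = "[(a, b), (a, \<not> b)]"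
      have fx: "fS x = fS u @ ?p @ fS v" using x True by simp
      have p: "?p \<in> words_over S" using True by simp
      have ep: "eval_word G ?p = \<one>" using eval_pair True by simp
      have "rho G rep g (fS x) = rho G rep g (fS u) @ rho G rep g1 (?p @ fS v)"
        unfolding fx g1_def using rho_append assms(2) words_over_filter by blast
      also have "\<dots> = rho G rep g (fS u) @ rho G rep g1 ?p @ rho G rep g1 (fS v)"
        using rho_append[OF g1 p] ep g1 by simp
      finally have ex: "rho G rep g (fS x) = rho G rep g (fS u) @ rho G rep g1 ?p @ rho G rep g1 (fS v)" .
      have "eval_word G (rho G rep g1 ?p) = \<one>"
        using eval_rho[OF g1 p] ep g1 by simp
      then have "eqT (rho G rep g1 ?p) []"
        using len2 rho_T[OF g1 p] by simp
      then show ?thesis unfolding ex fy by (rule pres_equiv_ctx)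
    next
      case False
      then show ?thesis using x y by (simp add: pres_equiv_refl)
    qed
  next
    assume "\<exists>r\<in>R. x = u @ r @ v"
    then obtain r where r: "r \<in> R" "x = u @ r @ v" by blast
    have rS: "r \<in> words_over S" and er: "eval_word G r = \<one>" using R_S R_eval r by auto
    have fx: "fS x = fS u @ r @ fS v" using r filter_words_over[OF rS] by simp
    have "rho G rep g (fS x) = rho G rep g (fS u) @ rho G rep g1 (r @ fS v)"
      unfolding fx g1_def using rho_append assms(2) words_over_filter by blast
    also have "\<dots> = rho G rep g (fS u) @ rho G rep g1 r @ rho G rep g1 (fS v)"
      using rho_append[OF g1 rS] er g1 by simp
    finally have ex: "rho G rep g (fS x) = rho G rep g (fS u) @ rho G rep g1 r @ rho G rep g1 (fS v)" .
    have "eval_word G (rho G rep g1 r) = \<one>"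
      using eval_rho[OF g1 rS] er g1 by simp
    then have "eqT (rho G rep g1 r) []"
      using len3 rho_T[OF g1 rS] R3 r by simp
    then show ?thesis unfolding ex fy by (rule pres_equiv_ctx)
  qed
qed

lemma rho_equiv: assumes "pres_equiv R x y" "g \<in> carrier G"
  shows "eqT (rho G rep g (fS x)) (rho G rep g (fS y))"
  using assms(1)
proof (induction rule: pres_equiv_induct)
  case refl then show ?case by (rule pres_equiv_refl)
next
  case (step y z)
  have "eqT (rho G rep g (fS y)) (rho G rep g (fS z))"
    using \<open>pres_step R y z \<or> pres_step R z y\<close>
  proof
    assume "pres_step R y z" then show ?thesis using rho_step[OF _ assms(2)] by blast
  next
    assume "pres_step R z y" then show ?thesis using rho_step[OF _ assms(2)] pres_equiv_sym by blast
  qed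
  then show ?case using \<open>eqT (rho G rep g (fS x)) (rho G rep g (fS y))\<close> pres_equiv_trans by blast
qed

end


lemma len3E: "length u = 3 \<Longrightarrow> \<exists>a b c. u = [a, b, c]"
  by (auto simp: numeral_3_eq_3 length_Suc_conv)
lemma len2E: "length u = 2 \<Longrightarrow> \<exists>a b. u = [a, b]"
  by (auto simp: numeral_2_eq_2 length_Suc_conv)

context ctx begin

lemma K_word: assumes "k \<in> K"
  shows "\<exists>u. u \<in> words_over S \<and> length u = 3 \<and> eval_word G u = k"
proof -
  obtain a b c where abc: "a \<in> S" "b \<in> S" "c \<in> S" "k = a \<otimes> b \<otimes> c"
    using assms unfolding K_def using S3E by blast
  have "eval_word G [(a, False), (b, False), (c, False)] = k"
    using abc by (simp add: m_assoc)
  then show ?thesis using abc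
    by (intro exI[of _ "[(a, False), (b, False), (c, False)]"]) auto
qed

definition sigP where "sigP l p \<longleftrightarrow> fst p \<in> words_over S \<and> snd p \<in> words_over S \<and>
  length (fst p) = 3 \<and> length (snd p) = 3 \<and> eval_word G (fst p) \<in> H \<and> eval_word G (snd p) \<in> H \<and>
  eval_word G (fst p) \<otimes> eval_word G (snd p) = letter_val G l"

definition sigma where "sigma l = (let p = (SOME p. sigP l p) in fst p @ snd p)"

lemma sig_ex: assumes "fst l \<in> T" shows "sigP l (SOME p. sigP l p)"
proof -
  have "letter_val G l \<in> T" using lv_T assms by blast
  then obtain k1 k2 where k: "k1 \<in> K" "k2 \<in> K" "letter_val G l = k1 \<otimes> k2" using TE by blast
  obtain u1 where u1: "u1 \<in> words_over S" "length u1 = 3" "eval_word G u1 = k1" using K_word k by blast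
  obtain u2 where u2: "u2 \<in> words_over S" "length u2 = 3" "eval_word G u2 = k2" using K_word k by blast
  have kH: "k1 \<in> H" "k2 \<in> H" using k K_H by blast+
  have "sigP l (u1, u2)" unfolding sigP_def fst_conv snd_conv
    by (intro conjI; (simp only: u1 u2 kH k(3))?)
  then show ?thesis by (rule someI)
qed

lemma eval3_K: assumes "u \<in> words_over S" "length u = 3" "eval_word G u \<in> H"
  shows "eval_word G u \<in> K"
proof -
  obtain l1 l2 l3 where u: "u = [l1, l2, l3]" using len3E[OF assms(2)] by blast
  have v: "letter_val G l1 \<in> S" "letter_val G l2 \<in> S" "letter_val G l3 \<in> S"
    using assms(1) u lv_S by auto
  have e: "eval_word G u = letter_val G l1 \<otimes> letter_val G l2 \<otimes> letter_val G l3"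
    using u v by (simp add: m_assoc)
  show ?thesis using KI[OF v] assms(3) e by simp
qed

lemma rho_letter: "x \<in> set (rho G rep g u) \<Longrightarrow> x = (fst x, False)"
  using rho_pos by (metis prod.collapse)

lemma Col3: assumes g: "g \<in> H" and u: "u \<in> words_over S" "length u = 3"
  and gu: "g \<otimes> eval_word G u \<in> H"
  shows "eqT (rho G rep g u) [(eval_word G u, False)]"
proof -
  obtain l1 l2 l3 where ul: "u = [l1, l2, l3]" using len3E[OF u(2)] by blast
  let ?u2 = "[l1, l2]"
  have gc: "g \<in> carrier G" using g by simp
  have u2: "?u2 \<in> words_over S" "[l3] \<in> words_over S" using u ul by auto
  have v: "letter_val G l1 \<in> S" "letter_val G l2 \<in> S" "letter_val G l3 \<in> S"
    using u(1) ul lv_S by auto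
  define g2 where "g2 = g \<otimes> eval_word G ?u2"
  have g2: "g2 \<in> carrier G" unfolding g2_def using rho_c gc u2 by blast
  have split: "rho G rep g u = rho G rep g ?u2 @ rho G rep g2 [l3]"
    using rho_append[OF gc u2(1), of "[l3]"] ul g2_def by simp
  obtain x1 x2 where x12: "rho G rep g ?u2 = [x1, x2]"
    using len2E[of "rho G rep g ?u2"] by simp
  obtain x3 where x3: "rho G rep g2 [l3] = [x3]" by simp
  have xT: "fst x1 \<in> T" "fst x2 \<in> T" "fst x3 \<in> T"
    using rho_T[OF gc u2(1)] rho_T[OF g2 u2(2)] x12 x3 by auto
  have xF: "x1 = (fst x1, False)" "x2 = (fst x2, False)" "x3 = (fst x3, False)"
    using rho_letter[of x1 g ?u2] rho_letter[of x2 g ?u2] rho_letter[of x3 g2 "[l3]"] x12 x3 by auto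
  have rep_g: "rep g = \<one>" using rep_1 g by blast
  define e2 where "e2 = eval_word G (rho G rep g ?u2)"
  have e2a: "e2 = letter_val G l1 \<otimes> letter_val G l2 \<otimes> inv (rep g2)"
    unfolding e2_def using eval_rho[OF gc u2(1)] rep_g v g2_def gc by (simp add: m_assoc)
  have e2H: "e2 \<in> H" unfolding e2_def using eval_H rho_K[OF gc u2(1)] words_over_mono K_H by blast
  have e2K: "e2 \<in> K" using KI[of "letter_val G l1" "letter_val G l2" "inv (rep g2)"] v rep_S[OF g2] S_inv
      e2a e2H by simp
  have e2T: "e2 \<in> T" using K_T e2K by blast
  have "letter_val G x1 \<otimes> letter_val G x2 = e2"
    unfolding e2_def x12 using xT xF by (simp add: letter_val_def)
  then have "letter_val G x1 \<otimes> letter_val G x2 = letter_val G (e2, False)" by simp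
  then have D1: "eqT [x1, x2] [(e2, False)]" using D xT e2T by simp
  have euH: "eval_word G u \<in> H"
  proof -
    have "eval_word G u = inv g \<otimes> (g \<otimes> eval_word G u)" using gc u(1) wS_c by simp
    then show ?thesis using gu g H_inv H_mult by metis
  qed
  have euT: "eval_word G u \<in> T" using eval3_K[OF u euH] K_T by blast
  have "eval_word G (rho G rep g u) = eval_word G u"
    using eval_rho[OF gc u(1)] rep_g rep_1[OF gu] gc u(1) wS_c by simp
  moreover have "eval_word G (rho G rep g u) = e2 \<otimes> letter_val G x3"
    unfolding split x12 e2_def x3 using xT by (simp add: m_assoc)
  ultimately have "letter_val G (e2, False) \<otimes> letter_val G x3 = letter_val G (eval_word G u, False)" by simp
  then have D2: "eqT [(e2, False), x3] [(eval_word G u, False)]" using D xT e2T euT by simp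
  have "eqT ([x1, x2] @ [x3]) ([(e2, False)] @ [x3])"
    using pres_equiv_app[OF D1 pres_equiv_refl] .
  then show ?thesis unfolding split x12 x3 using D2 pres_equiv_trans by simp
qed

end


context ctx begin

lemma sigma_props: assumes "fst l \<in> T"
  shows "sigma l \<in> words_over S" "eval_word G (sigma l) = letter_val G l"
proof -
  let ?p = "SOME p. sigP l p"
  have P: "sigP l ?p" using sig_ex assms by blast
  have s: "sigma l = fst ?p @ snd ?p" unfolding sigma_def Let_def by simp
  show "sigma l \<in> words_over S" using P unfolding s sigP_def words_over_append by blast
  have a: "fst ?p \<in> words_over S" "snd ?p \<in> words_over S"
    "eval_word G (fst ?p) \<otimes> eval_word G (snd ?p) = letter_val G l"
    using P unfolding sigP_def by blast+
  have "eval_word G (sigma l) = eval_word G (fst ?p) \<otimes> eval_word G (snd ?p)"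
    unfolding s by (rule eval_word_append[OF wS_c[OF a(1)] wS_c[OF a(2)]])
  then show "eval_word G (sigma l) = letter_val G l" using a(3) by (rule trans)
qed

lemma block: assumes g: "g \<in> H" and l: "fst l \<in> T"
  shows "eqT (rho G rep g (sigma l)) [l]"
proof -
  let ?p = "SOME p. sigP l p"
  define u1 where "u1 = fst ?p"
  define u2 where "u2 = snd ?p"
  have P: "sigP l ?p" using sig_ex l by blast
  have s: "sigma l = u1 @ u2" unfolding sigma_def Let_def u1_def u2_def by simp
  have u: "u1 \<in> words_over S" "u2 \<in> words_over S" "length u1 = 3" "length u2 = 3"
    "eval_word G u1 \<in> H" "eval_word G u2 \<in> H"
    "eval_word G u1 \<otimes> eval_word G u2 = letter_val G l"
    using P unfolding sigP_def u1_def u2_def by auto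
  have gc: "g \<in> carrier G" using g by simp
  define g1 where "g1 = g \<otimes> eval_word G u1"
  have g1: "g1 \<in> H" unfolding g1_def using g u H_mult by blast
  have g2: "g1 \<otimes> eval_word G u2 \<in> H" using g1 u H_mult by blast
  have r: "rho G rep g (sigma l) = rho G rep g u1 @ rho G rep g1 u2"
    unfolding s g1_def using rho_append[OF gc u(1)] by simp
  have c1: "eqT (rho G rep g u1) [(eval_word G u1, False)]"
    using Col3[OF g u(1) u(3)] g1 g1_def by simp
  have c2: "eqT (rho G rep g1 u2) [(eval_word G u2, False)]"
    using Col3[OF g1 u(2) u(4) g2] .
  have e1: "eval_word G u1 \<in> T" using eval3_K[OF u(1) u(3) u(5)] K_T by blast
  have e2: "eval_word G u2 \<in> T" using eval3_K[OF u(2) u(4) u(6)] K_T by blast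
  have "eqT [(eval_word G u1, False), (eval_word G u2, False)] [l]"
    using D[of "(eval_word G u1, False)" "(eval_word G u2, False)" l] e1 e2 l u(7) by simp
  moreover have "eqT (rho G rep g u1 @ rho G rep g1 u2) ([(eval_word G u1, False)] @ [(eval_word G u2, False)])"
    using pres_equiv_app[OF c1 c2] .
  ultimately show ?thesis unfolding r using pres_equiv_trans by simp
qed

definition sigw where "sigw w = concat (map sigma w)"

lemma sigw_props: "w \<in> words_over T \<Longrightarrow> sigw w \<in> words_over S \<and> eval_word G (sigw w) = eval_word G w"
proof (induction w)
  case Nil then show ?case by (simp add: sigw_def)
next
  case (Cons l w)
  have l: "fst l \<in> T" "w \<in> words_over T" using Cons.prems by auto
  have sw: "sigw (l # w) = sigma l @ sigw w" by (simp add: sigw_def)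
  have a: "sigma l \<in> words_over S" "eval_word G (sigma l) = letter_val G l" using sigma_props l by auto
  have b: "sigw w \<in> words_over S" "eval_word G (sigw w) = eval_word G w" using Cons.IH l by auto
  show ?case unfolding sw using a b eval_word_append wS_c by simp
qed

lemma sigw_rho: "w \<in> words_over T \<Longrightarrow> g \<in> H \<Longrightarrow> eqT (rho G rep g (sigw w)) w"
proof (induction w arbitrary: g)
  case Nil then show ?case by (simp add: sigw_def pres_equiv_refl)
next
  case (Cons l w)
  have l: "fst l \<in> T" "w \<in> words_over T" using Cons.prems by auto
  have gc: "g \<in> carrier G" using Cons.prems by simp
  have sw: "sigw (l # w) = sigma l @ sigw w" by (simp add: sigw_def)
  have a: "sigma l \<in> words_over S" "eval_word G (sigma l) = letter_val G l" using sigma_props l by auto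
  have gl: "g \<otimes> letter_val G l \<in> H" using Cons.prems lv_T[OF l(1)] T_H H_mult by blast
  have r: "rho G rep g (sigw (l # w)) = rho G rep g (sigma l) @ rho G rep (g \<otimes> letter_val G l) (sigw w)"
    unfolding sw using rho_append[OF gc a(1)] a(2) by simp
  have "eqT (rho G rep g (sigw (l # w))) ([l] @ w)"
    unfolding r using pres_equiv_app[OF block[OF Cons.prems(2) l(1)] Cons.IH[OF l(2) gl]] .
  then show ?case by simp
qed

lemma complete: assumes "w \<in> words_over T" "w' \<in> words_over T" "eval_word G w = eval_word G w'"
  shows "eqT w w'"
proof -
  have s: "sigw w \<in> words_over S" "sigw w' \<in> words_over S"
    "eval_word G (sigw w) = eval_word G (sigw w')"
    using sigw_props assms by auto
  have "pres_equiv R (sigw w) (sigw w')"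
    using pres s unfolding is_presentation_def by blast
  then have "eqT (rho G rep \<one> (fS (sigw w))) (rho G rep \<one> (fS (sigw w')))"
    using rho_equiv by simp
  then have "eqT (rho G rep \<one> (sigw w)) (rho G rep \<one> (sigw w'))"
    using filter_words_over s by metis
  then show ?thesis
    using sigw_rho[OF assms(1) H_one] sigw_rho[OF assms(2) H_one] pres_equiv_sym pres_equiv_trans
    by meson
qed

lemma gen_word: "x \<in> generate G S \<Longrightarrow> \<exists>u. u \<in> words_over S \<and> eval_word G u = x"
proof (induction rule: generate.induct)
  case one then show ?case by (intro exI[of _ "[]"]) simp
next
  case (incl h) then show ?case by (intro exI[of _ "[(h, False)]"]) simp
next
  case (inv h) then show ?case by (intro exI[of _ "[(h, True)]"]) simp
next
  case (eng h1 h2)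
  then obtain u1 u2 where "u1 \<in> words_over S" "eval_word G u1 = h1" "u2 \<in> words_over S" "eval_word G u2 = h2"
    by blast
  then show ?case using eval_word_append wS_c by (intro exI[of _ "u1 @ u2"]) simp
qed

lemma pos_gen: "w \<in> words_over T \<Longrightarrow> (\<forall>l\<in>set w. snd l = False) \<Longrightarrow>
   eval_word G w \<in> generate (G\<lparr>carrier := H\<rparr>) T"
proof (induction w)
  case Nil
  have "\<one>\<^bsub>G\<lparr>carrier := H\<rparr>\<^esub> \<in> generate (G\<lparr>carrier := H\<rparr>) T" by (rule generate.one)
  then show ?case by simp
next
  case (Cons l w)
  have l: "fst l \<in> T" "snd l = False" using Cons.prems by auto
  have "fst l \<otimes>\<^bsub>G\<lparr>carrier := H\<rparr>\<^esub> eval_word G w \<in> generate (G\<lparr>carrier := H\<rparr>) T"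
    using generate.eng[OF generate.incl[OF l(1)] Cons.IH] Cons.prems by auto
  moreover have "letter_val G l = fst l" using l unfolding letter_val_def by simp
  ultimately show ?case by simp
qed

lemma gen_H: "generate (G\<lparr>carrier := H\<rparr>) T = H"
proof
  have grp: "group (G\<lparr>carrier := H\<rparr>)" using subgroup.subgroup_is_group[OF sub] is_group by blast
  have "T \<subseteq> carrier (G\<lparr>carrier := H\<rparr>)" using T_H by auto
  then show "generate (G\<lparr>carrier := H\<rparr>) T \<subseteq> H"
    using group.generate_in_carrier[OF grp] by fastforce
next
  show "H \<subseteq> generate (G\<lparr>carrier := H\<rparr>) T"
  proof
    fix h assume h: "h \<in> H"
    then have "h \<in> generate G S" using pres unfolding is_presentation_def by auto
    then obtain u where u: "u \<in> words_over S" "eval_word G u = h" using gen_word by blast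
    have e: "eval_word G (rho G rep \<one> u) = h"
      using eval_rho[OF one_closed u(1)] u h rep_1 by simp
    have "eval_word G (rho G rep \<one> u) \<in> generate (G\<lparr>carrier := H\<rparr>) T"
      using pos_gen rho_T[OF one_closed u(1)] rho_pos by blast
    then show "h \<in> generate (G\<lparr>carrier := H\<rparr>) T" using e by simp
  qed
qed

lemma eval_sub: "w \<in> words_over H \<Longrightarrow> eval_word (G\<lparr>carrier := H\<rparr>) w = eval_word G w"
proof (induction w)
  case Nil then show ?case by simp
next
  case (Cons l w)
  have "letter_val (G\<lparr>carrier := H\<rparr>) l = letter_val G l"
    using Cons.prems m_inv_consistent[OF sub] unfolding letter_val_def by auto
  then show ?case using Cons by simp
qed

lemma main: "determining_set (G\<lparr>carrier := H\<rparr>) T"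
  unfolding determining_set_def
proof (intro conjI)
  show "T \<subseteq> carrier (G\<lparr>carrier := H\<rparr>)" using T_H by auto
  show "\<one>\<^bsub>G\<lparr>carrier := H\<rparr>\<^esub> \<in> T" by simp
  show gen: "generate (G\<lparr>carrier := H\<rparr>) T = carrier (G\<lparr>carrier := H\<rparr>)" using gen_H by simp
  show "\<exists>R. (\<forall>r\<in>R. length r = 3) \<and> is_presentation (G\<lparr>carrier := H\<rparr>) T R"
  proof (intro exI conjI)
    show "\<forall>r\<in>RT. length r = 3" unfolding RT_def by simp
    show "is_presentation (G\<lparr>carrier := H\<rparr>) T RT"
      unfolding is_presentation_def
    proof (intro conjI ballI)
      show "T \<subseteq> carrier (G\<lparr>carrier := H\<rparr>)" using T_H by auto
      show "RT \<subseteq> words_over T" unfolding RT_def by auto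
      show "generate (G\<lparr>carrier := H\<rparr>) T = carrier (G\<lparr>carrier := H\<rparr>)" using gen .
      fix w w' assume w: "w \<in> words_over T" "w' \<in> words_over T"
      have e: "eval_word (G\<lparr>carrier := H\<rparr>) w = eval_word G w"
        "eval_word (G\<lparr>carrier := H\<rparr>) w' = eval_word G w'"
        using eval_sub wT_H w by auto
      show "(eval_word (G\<lparr>carrier := H\<rparr>) w = eval_word (G\<lparr>carrier := H\<rparr>) w') = pres_equiv RT w w'"
        unfolding e using complete[OF w] eqT_sound[OF _ w] by blast
    qed
  qed
qed

end


theorem mainTheorem16:
  fixes G :: "('a, 'b) monoid_scheme" and S H :: "'a set"
  assumes "group G"
    and "S \<subseteq> carrier G"
    and "\<forall>s\<in>S. inv\<^bsub>G\<^esub> s \<in> S"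
    and "determining_set G S"
    and "H \<lhd> G"
    and "finite (rcosets\<^bsub>G\<^esub> H)"
    and "\<forall>C\<in>rcosets\<^bsub>G\<^esub> H. S \<inter> C \<noteq> {}"
  shows "determining_set (G\<lparr>carrier := H\<rparr>)
           (((S <#>\<^bsub>G\<^esub> S <#>\<^bsub>G\<^esub> S) \<inter> H) <#>\<^bsub>G\<^esub> ((S <#>\<^bsub>G\<^esub> S <#>\<^bsub>G\<^esub> S) \<inter> H))"
proof -
  interpret group G by (rule assms(1))
  have one_S: "\<one>\<^bsub>G\<^esub> \<in> S" using assms(4) unfolding determining_set_def by blast
  obtain R where R: "\<forall>r\<in>R. length r = 3" "is_presentation G S R"
    using assms(4) unfolding determining_set_def by blast
  have sub: "subgroup H G" using assms(5) by (rule normal_imp_subgroup)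
  define rep where "rep g = (if g \<in> H then \<one>\<^bsub>G\<^esub> else (SOME s. s \<in> S \<inter> (H #>\<^bsub>G\<^esub> g)))" for g
  have rep_props: "rep g \<in> S \<and> rep g \<otimes>\<^bsub>G\<^esub> inv\<^bsub>G\<^esub> g \<in> H" if g: "g \<in> carrier G" for g
  proof (cases "g \<in> H")
    case True
    then show ?thesis unfolding rep_def using one_S g subgroup.m_inv_closed[OF sub] by simp
  next
    case False
    have "H #>\<^bsub>G\<^esub> g \<in> rcosets\<^bsub>G\<^esub> H" unfolding RCOSETS_def using g by blast
    then have "\<exists>s. s \<in> S \<inter> (H #>\<^bsub>G\<^esub> g)" using assms(7) by blast
    then have s: "rep g \<in> S \<inter> (H #>\<^bsub>G\<^esub> g)" unfolding rep_def using False someI_ex[of "\<lambda>s. s \<in> S \<inter> (H #>\<^bsub>G\<^esub> g)"] by simp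
    then obtain h where h: "h \<in> H" "rep g = h \<otimes>\<^bsub>G\<^esub> g" unfolding r_coset_def by blast
    have hc: "h \<in> carrier G" using h subgroup.subset[OF sub] by blast
    have "rep g \<otimes>\<^bsub>G\<^esub> inv\<^bsub>G\<^esub> g = h" using h hc g by (simp add: m_assoc)
    then show ?thesis using s h by simp
  qed
  have rep_1: "rep g = \<one>\<^bsub>G\<^esub>" if "g \<in> H" for g using that unfolding rep_def by simp
  interpret C: ctx G S H R rep
  proof (rule ctx.intro[OF assms(1)], rule ctx_axioms.intro)
    show "\<And>g. g \<in> carrier G \<Longrightarrow> rep g \<in> S" using rep_props by blast
    show "\<And>g. g \<in> carrier G \<Longrightarrow> rep g \<otimes>\<^bsub>G\<^esub> inv\<^bsub>G\<^esub> g \<in> H" using rep_props by blast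
  qed (use assms(2,3) one_S R sub rep_1 in auto)
  show ?thesis using C.main unfolding C.T_def C.K_def .
qed

end
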